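(* Let $\mathfrak H$ be the Hecke algebroid of a dihedral group (finite or infinite). Any trace $(\epsilon_X)_X$ on $\mathfrak H$ is determined by its component $\epsilon_\emptyset\colon\mathrm{End}(\emptyset)\to\mathbb Z[v^{\pm1}]$.
   Context: Let $W$ be generated by involutions $s,t$ with $st$ of order $m\in\{2,3,\dots\}\cup\{\infty\}$, with Hecke algebra $\mathbf H$ over $\mathbb Z[v^{\pm1}]$ (generators $T_s,T_t$, $T_i^2=(v^{-2}-1)T_i+v^{-2}$, braid relation of length $m$ if $m<\infty$) and Kazhdan–Lusztig basis $b_w=v^{\ell(w)}\sum_{x\le w}T_x$. For each finitary parabolic subset $J\subset\{s,t\}$ (i.e. $W_J$ finite) let $b_J=b_{w_J}$ ($w_J$ longest element of $W_J$) and $[J]=v^{-\ell(w_J)}\sum_{w\in W_J}v^{2\ell(w)}$. The Hecke algebroid has objects the finitary parabolic subsets, $\mathrm{Hom}(J,K)=\mathbf Hb_J\cap b_K\mathbf H$, composition $x\star y=xy/[J]$ for $x\in\mathrm{Hom}(J,K)$, $y\in\mathrm{Hom}(L,J)$. A trace on it is a family of $\mathbb Z[v^{\pm1}]$-linear maps $\epsilon_X\colon\mathrm{End}(X)\to\mathbb Z[v^{\pm1}]$ with $\epsilon_X(a\star b)=\epsilon_Y(b\star a)$ for all $a\in\mathrm{Hom}(Y,X)$, $b\in\mathrm{Hom}(X,Y)$. *)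

theory Defs
  imports Main "HOL-Library.Poly_Mapping" "HOL-Library.Extended_Nat" "HOL-Library.Sublist"
begin

text \<open>Laurent polynomials Z[v,v^-1] as the group ring of (int,+) over int.
  The exponent k corresponds to v^k.\<close>
type_synonym laurent = "int \<Rightarrow>\<^sub>0 int"

definition vp :: "int \<Rightarrow> laurent" where
  "vp k = Poly_Mapping.single k 1"

text \<open>The dihedral group W generated by s (= True) and t (= False) with st of order m
  (m :: enat, m = \<infinity> allowed).  Elements are represented by their reduced (alternating)
  words; the longest element (for m finite) is represented by the word starting with s.\<close>

definition alt :: "bool \<Rightarrow> nat \<Rightarrow> bool list" where
  "alt b n = map (\<lambda>i. if even i then b else \<not> b) [0..<n]"

definition Wd :: "enat \<Rightarrow> bool list set" where
  "Wd m = {alt b n | b n. enat n \<le> m \<and> (enat n = m \<longrightarrow> b)}"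

definition canon :: "enat \<Rightarrow> bool list \<Rightarrow> bool list" where
  "canon m w = (if enat (length w) = m then alt True (length w) else w)"

definition gmul :: "enat \<Rightarrow> bool \<Rightarrow> bool list \<Rightarrow> bool list" where
  "gmul m c w = canon m
     (if w \<noteq> [] \<and> hd w = c then tl w
      else if enat (length w) = m then tl (alt c (length w))
      else c # w)"

definition weval :: "enat \<Rightarrow> bool list \<Rightarrow> bool list" where
  "weval m u = foldr (gmul m) u []"

text \<open>Bruhat order via the subword property (w is a reduced word).\<close>
definition bruhat_le :: "enat \<Rightarrow> bool list \<Rightarrow> bool list \<Rightarrow> bool" where
  "bruhat_le m x w = (\<exists>u. subseq u w \<and> weval m u = x)"

text \<open>The Hecke algebra: the free Z[v^{+-1}]-module on W (elements supported on Wd m),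
  with basis T_w, multiplication defined through the left regular action
  T_c T_w = T_{cw} if l(cw) > l(w), and = (v^-2 - 1) T_w + v^-2 T_{cw} otherwise.\<close>
type_synonym hecke = "bool list \<Rightarrow>\<^sub>0 laurent"

definition hsmul :: "laurent \<Rightarrow> hecke \<Rightarrow> hecke" where
  "hsmul a x = Poly_Mapping.map ((*) a) x"

definition HT :: "bool list \<Rightarrow> hecke" where
  "HT w = Poly_Mapping.single w 1"

definition Hset :: "enat \<Rightarrow> hecke set" where
  "Hset m = {x. Poly_Mapping.keys x \<subseteq> Wd m}"

definition Tbasis :: "enat \<Rightarrow> bool \<Rightarrow> bool list \<Rightarrow> hecke" where
  "Tbasis m c w =
     (if length w < length (gmul m c w) then HT (gmul m c w)
      else hsmul (vp (-2) - 1) (HT w) + hsmul (vp (-2)) (HT (gmul m c w)))"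

definition Tgen :: "enat \<Rightarrow> bool \<Rightarrow> hecke \<Rightarrow> hecke" where
  "Tgen m c y = (\<Sum>w\<in>Poly_Mapping.keys y. hsmul (Poly_Mapping.lookup y w) (Tbasis m c w))"

definition Top :: "enat \<Rightarrow> bool list \<Rightarrow> hecke \<Rightarrow> hecke" where
  "Top m w = foldr (\<lambda>c f. Tgen m c \<circ> f) w id"

definition hmul :: "enat \<Rightarrow> hecke \<Rightarrow> hecke \<Rightarrow> hecke" where
  "hmul m x y = (\<Sum>w\<in>Poly_Mapping.keys x. hsmul (Poly_Mapping.lookup x w) (Top m w y))"

definition KL :: "enat \<Rightarrow> bool list \<Rightarrow> hecke" where
  "KL m w = hsmul (vp (int (length w))) (\<Sum>x\<in>{x\<in>Wd m. bruhat_le m x w}. HT x)"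

definition WJ :: "enat \<Rightarrow> bool set \<Rightarrow> bool list set" where
  "WJ m J = {w\<in>Wd m. set w \<subseteq> J}"

definition finitary :: "enat \<Rightarrow> bool set \<Rightarrow> bool" where
  "finitary m J = finite (WJ m J)"

definition wJ :: "enat \<Rightarrow> bool set \<Rightarrow> bool list" where
  "wJ m J = (THE w. w \<in> WJ m J \<and> (\<forall>x\<in>WJ m J. length x \<le> length w))"

definition bJ :: "enat \<Rightarrow> bool set \<Rightarrow> hecke" where
  "bJ m J = KL m (wJ m J)"

definition brk :: "enat \<Rightarrow> bool set \<Rightarrow> laurent" where
  "brk m J = vp (- int (length (wJ m J))) * (\<Sum>w\<in>WJ m J. vp (2 * int (length w)))"

definition hHom :: "enat \<Rightarrow> bool set \<Rightarrow> bool set \<Rightarrow> hecke set" where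
  "hHom m J K = {hmul m x (bJ m J) | x. x \<in> Hset m} \<inter> {hmul m (bJ m K) y | y. y \<in> Hset m}"

definition hEnd :: "enat \<Rightarrow> bool set \<Rightarrow> hecke set" where
  "hEnd m X = hHom m X X"

definition star :: "enat \<Rightarrow> bool set \<Rightarrow> hecke \<Rightarrow> hecke \<Rightarrow> hecke" where
  "star m J x y = (THE z. hsmul (brk m J) z = hmul m x y)"

definition is_trace :: "enat \<Rightarrow> (bool set \<Rightarrow> hecke \<Rightarrow> laurent) \<Rightarrow> bool" where
  "is_trace m eps =
     ((\<forall>X. finitary m X \<longrightarrow>
        (\<forall>a\<in>hEnd m X. \<forall>b\<in>hEnd m X. \<forall>c.
           eps X (hsmul c a + b) = c * eps X a + eps X b)) \<and>
      (\<forall>X Y. finitary m X \<longrightarrow> finitary m Y \<longrightarrow>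
        (\<forall>a\<in>hHom m Y X. \<forall>b\<in>hHom m X Y.
           eps X (star m Y a b) = eps Y (star m X b a))))"

end

theory Submission
  imports Defs
begin


lemma alt_0[simp]: "alt b 0 = []" by (simp add: alt_def)
lemma alt_Suc: "alt b (Suc n) = b # alt (\<not> b) n"
  unfolding alt_def by (simp add: upt_conv_Cons map_Suc_upt[symmetric] del: upt_Suc)
lemma length_alt[simp]: "length (alt b n) = n" by (simp add: alt_def)
lemma alt_Nil_iff[simp]: "alt b n = [] \<longleftrightarrow> n = 0" by (simp add: alt_def)
lemma alt_snoc: "alt b (Suc n) = alt b n @ [if even n then b else \<not> b]"
  unfolding alt_def by simp
lemma alt_eq_iff: "alt b n = alt b' n' \<longleftrightarrow> n = n' \<and> (n = 0 \<or> b = b')"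
proof
  assume h: "alt b n = alt b' n'"
  hence "n = n'" by (metis length_alt)
  moreover have "n = 0 \<or> b = b'" using h \<open>n = n'\<close> by (cases n) (auto simp: alt_Suc)
  ultimately show "n = n' \<and> (n = 0 \<or> b = b')" by simp
qed auto

lemma hd_alt: "n > 0 \<Longrightarrow> hd (alt b n) = b" by (cases n) (auto simp: alt_Suc)
lemma tl_alt: "tl (alt b n) = alt (\<not> b) (n - 1)" by (cases n) (auto simp: alt_Suc)
lemma last_alt: "n > 0 \<Longrightarrow> last (alt b n) = (if even (n - 1) then b else \<not> b)"
  by (cases n) (auto simp: alt_snoc)
lemma butlast_alt: "butlast (alt b n) = alt b (n - 1)"
  by (cases n) (auto simp: alt_snoc)

lemma canon_alt: "canon m (alt b k) = (if enat k = m then alt True k else alt b k)"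
  by (simp add: canon_def)

lemma gmul_alt: "gmul m c (alt b n) = canon m
   (if 0 < n \<and> b = c then alt (\<not> b) (n - 1) else if enat n = m then alt (\<not> c) (n - 1)
    else alt c (n + 1))"
proof -
  have "c # alt b n = alt c (n+1)" if "\<not> (0 < n \<and> b = c)"
    using that by (cases n) (auto simp: alt_Suc)
  show ?thesis
  proof (cases "0 < n \<and> b = c")
    case True thus ?thesis unfolding gmul_def using hd_alt[of n b] tl_alt[of b n] by auto
  next
    case False
    hence ne: "alt b n \<noteq> [] \<Longrightarrow> hd (alt b n) \<noteq> c" using hd_alt[of n b] by auto
    show ?thesis unfolding gmul_def using False ne tl_alt[of c n] \<open>\<not> (0 < n \<and> b = c) \<Longrightarrow> _\<close> by auto
  qed
qed



definition gmulR :: "enat \<Rightarrow> bool \<Rightarrow> bool list \<Rightarrow> bool list" where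
  "gmulR m d w = canon m
     (if w \<noteq> [] \<and> last w = d then butlast w
      else if enat (length w) = m then butlast (alt (\<not> hd w) (length w))
      else w @ [d])"

lemma gmulR_alt: "gmulR m d (alt b n) = canon m
   (if 0 < n \<and> (if even (n - 1) then b else \<not> b) = d then alt b (n - 1)
    else if enat n = m then alt (\<not> b) (n - 1)
    else if n = 0 then alt d 1 else alt b (n + 1))"
proof (cases "0 < n \<and> (if even (n - 1) then b else \<not> b) = d")
  case True thus ?thesis unfolding gmulR_def using last_alt[of n b] butlast_alt[of b n] by auto
next
  case False
  hence ne: "alt b n \<noteq> [] \<Longrightarrow> last (alt b n) \<noteq> d" using last_alt[of n b] by auto
  have e: "n \<noteq> 0 \<Longrightarrow> alt b n @ [d] = alt b (n+1)" using False
    by (cases n) (auto simp: alt_snoc[of b "Suc _"])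
  have h: "n \<noteq> 0 \<Longrightarrow> hd (alt b n) = b" using hd_alt by auto
  show ?thesis unfolding gmulR_def using False ne e h butlast_alt[of "\<not> b" n]
    by (auto simp: alt_Suc)
qed

lemma canon_Nil[simp]: "canon m [] = []" by (simp add: canon_def)
lemma alt_1[simp]: "alt b (Suc 0) = [b]" by (simp add: alt_Suc)
lemma canon_single: "2 \<le> m \<Longrightarrow> canon m [c] = [c]"
  by (cases m) (auto simp: canon_def)

lemma length_canon[simp]: "length (canon m w) = length w" by (simp add: canon_def)

lemma Wd_iff: "w \<in> Wd m \<longleftrightarrow> (\<exists>b n. w = alt b n \<and> enat n \<le> m \<and> (enat n = m \<longrightarrow> b))"
  unfolding Wd_def by auto

lemma assoc_alt:
  assumes "enat n \<le> m" "enat n = m \<longrightarrow> b" "2 \<le> m"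
  shows "gmul m c (gmulR m d (alt b n)) = gmulR m d (gmul m c (alt b n))"
proof (cases m)
  case (enat M)
  have "n = 0 \<or> (n > 0 \<and> n = M) \<or> (n > 0 \<and> n + 1 = M) \<or> (n > 0 \<and> n + 2 = M) \<or> (n > 0 \<and> n + 2 < M)"
    using assms enat by auto
  thus ?thesis using assms enat
    apply (elim disjE; cases b; cases c; cases d; cases "even n")
    apply (simp_all add: gmul_alt gmulR_alt canon_alt alt_eq_iff Wd_iff del: alt_0 alt_1)
    apply (presburger+)?
    done
next
  case infinity
  thus ?thesis using assms
    apply (cases "n = 0"; cases b; cases c; cases d; cases "even n")
    apply (simp_all add: gmul_alt gmulR_alt canon_alt alt_eq_iff Wd_iff del: alt_0 alt_1)
    apply (presburger+)?
    done
qed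

lemma invL_alt:
  assumes "enat n \<le> m" "enat n = m \<longrightarrow> b" "2 \<le> m"
  shows "gmul m c (gmul m c (alt b n)) = alt b n"
proof (cases m)
  case (enat M)
  have "n = 0 \<or> (n > 0 \<and> n = M) \<or> (n > 0 \<and> n + 1 = M) \<or> (n > 0 \<and> n + 2 = M) \<or> (n > 0 \<and> n + 2 < M)"
    using assms enat by auto
  thus ?thesis using assms enat
    apply (elim disjE; cases b; cases c; cases "even n")
    apply (simp_all add: gmul_alt gmulR_alt canon_alt alt_eq_iff Wd_iff del: alt_0 alt_1)
    apply (presburger+)?
    done
next
  case infinity
  thus ?thesis using assms
    apply (cases "n = 0"; cases b; cases c; cases "even n")
    apply (simp_all add: gmul_alt gmulR_alt canon_alt alt_eq_iff Wd_iff del: alt_0 alt_1)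
    apply (presburger+)?
    done
qed

lemma invR_alt:
  assumes "enat n \<le> m" "enat n = m \<longrightarrow> b" "2 \<le> m"
  shows "gmulR m d (gmulR m d (alt b n)) = alt b n"
proof (cases m)
  case (enat M)
  have "n = 0 \<or> (n > 0 \<and> n = M) \<or> (n > 0 \<and> n + 1 = M) \<or> (n > 0 \<and> n + 2 = M) \<or> (n > 0 \<and> n + 2 < M)"
    using assms enat by auto
  thus ?thesis using assms enat
    apply (elim disjE; cases b; cases d; cases "even n")
    apply (simp_all add: gmul_alt gmulR_alt canon_alt alt_eq_iff Wd_iff del: alt_0 alt_1)
    apply (presburger+)?
    done
next
  case infinity
  thus ?thesis using assms
    apply (cases "n = 0"; cases b; cases d; cases "even n")
    apply (simp_all add: gmul_alt gmulR_alt canon_alt alt_eq_iff Wd_iff del: alt_0 alt_1)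
    apply (presburger+)?
    done
qed

lemma lenL_alt:
  assumes "enat n \<le> m" "enat n = m \<longrightarrow> b" "2 \<le> m"
  shows "length (gmul m c (alt b n)) = (if (0 < n \<and> b = c) \<or> enat n = m then n - 1 else n + 1)"
proof (cases m)
  case (enat M)
  have "n = 0 \<or> (n > 0 \<and> n = M) \<or> (n > 0 \<and> n + 1 = M) \<or> (n > 0 \<and> n + 2 = M) \<or> (n > 0 \<and> n + 2 < M)"
    using assms enat by auto
  thus ?thesis using assms enat
    apply (elim disjE; cases b; cases c; cases "even n")
    apply (simp_all add: gmul_alt gmulR_alt canon_alt alt_eq_iff Wd_iff del: alt_0 alt_1)
    apply (presburger+)?
    done
next
  case infinity
  thus ?thesis using assms
    apply (cases "n = 0"; cases b; cases c; cases "even n")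
    apply (simp_all add: gmul_alt gmulR_alt canon_alt alt_eq_iff Wd_iff del: alt_0 alt_1)
    apply (presburger+)?
    done
qed

lemma lenR_alt:
  assumes "enat n \<le> m" "enat n = m \<longrightarrow> b" "2 \<le> m"
  shows "length (gmulR m d (alt b n)) = (if (0 < n \<and> (if even (n - 1) then b else \<not> b) = d) \<or> enat n = m then n - 1 else n + 1)"
proof (cases m)
  case (enat M)
  have "n = 0 \<or> (n > 0 \<and> n = M) \<or> (n > 0 \<and> n + 1 = M) \<or> (n > 0 \<and> n + 2 = M) \<or> (n > 0 \<and> n + 2 < M)"
    using assms enat by auto
  thus ?thesis using assms enat
    apply (elim disjE; cases b; cases d; cases "even n")
    apply (simp_all add: gmul_alt gmulR_alt canon_alt alt_eq_iff Wd_iff del: alt_0 alt_1)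
    apply (presburger+)?
    done
next
  case infinity
  thus ?thesis using assms
    apply (cases "n = 0"; cases b; cases d; cases "even n")
    apply (simp_all add: gmul_alt gmulR_alt canon_alt alt_eq_iff Wd_iff del: alt_0 alt_1)
    apply (presburger+)?
    done
qed

lemma exch_alt0:
  assumes "enat n \<le> m" "enat n = m \<longrightarrow> b" "2 \<le> m"
  shows "length (gmul m c (gmulR m d (alt b n))) \<noteq> n \<or> (length (gmul m c (alt b n)) > n) \<noteq> (length (gmulR m d (alt b n)) > n) \<or> gmul m c (alt b n) = gmulR m d (alt b n)"
proof (cases m)
  case (enat M)
  have "n = 0 \<or> (n > 0 \<and> n = M) \<or> (n > 0 \<and> n + 1 = M) \<or> (n > 0 \<and> n + 2 = M) \<or> (n > 0 \<and> n + 2 < M)"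
    using assms enat by auto
  thus ?thesis using assms enat
    apply (elim disjE; cases b; cases c; cases d; cases "even n")
    apply (simp_all add: gmul_alt gmulR_alt canon_alt alt_eq_iff if_distrib[of "canon _"] if_distrib[of length] del: alt_0 alt_1)
    apply (presburger+)?
    done
next
  case infinity
  thus ?thesis using assms
    apply (cases "n = 0"; cases b; cases c; cases d; cases "even n")
    apply (simp_all add: gmul_alt gmulR_alt canon_alt alt_eq_iff if_distrib[of "canon _"] if_distrib[of length] del: alt_0 alt_1)
    apply (presburger+)?
    done
qed

lemma canon_Wd: "enat k \<le> m \<Longrightarrow> canon m (alt x k) \<in> Wd m"
  by (auto simp: canon_alt Wd_def)

lemma WdL_alt:
  assumes "enat n \<le> m" "enat n = m \<longrightarrow> b" "2 \<le> m"
  shows "gmul m c (alt b n) \<in> Wd m"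
  unfolding gmul_alt using assms
  by (cases m) (auto intro!: canon_Wd simp del: alt_0 alt_1)

lemma WdR_alt:
  assumes "enat n \<le> m" "enat n = m \<longrightarrow> b" "2 \<le> m"
  shows "gmulR m c (alt b n) \<in> Wd m"
  unfolding gmulR_alt using assms
  by (cases m) (auto intro!: canon_Wd simp del: alt_0 alt_1)



section \<open>Group facts for elements of Wd\<close>

lemma Wd_cases:
  assumes "w \<in> Wd m"
  obtains b n where "w = alt b n" "enat n \<le> m" "enat n = m \<longrightarrow> b"
  using assms unfolding Wd_iff by blast

context fixes m :: enat assumes m2: "2 \<le> m" begin

lemma gmul_Wd: "w \<in> Wd m \<Longrightarrow> gmul m c w \<in> Wd m"
  by (erule Wd_cases) (simp add: WdL_alt m2)
lemma gmulR_Wd: "w \<in> Wd m \<Longrightarrow> gmulR m c w \<in> Wd m"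
  by (erule Wd_cases) (simp add: WdR_alt m2)
lemma gmul_inv: "w \<in> Wd m \<Longrightarrow> gmul m c (gmul m c w) = w"
  by (erule Wd_cases) (simp add: invL_alt m2)
lemma gmulR_inv: "w \<in> Wd m \<Longrightarrow> gmulR m c (gmulR m c w) = w"
  by (erule Wd_cases) (simp add: invR_alt m2)
lemma gmul_assoc: "w \<in> Wd m \<Longrightarrow> gmul m c (gmulR m d w) = gmulR m d (gmul m c w)"
  by (erule Wd_cases) (simp add: assoc_alt m2)
lemma gmul_len: "w \<in> Wd m \<Longrightarrow> length (gmul m c w) = length w + 1 \<or> length (gmul m c w) + 1 = length w"
proof (erule Wd_cases)
  fix b n assume h: "w = alt b n" "enat n \<le> m" "enat n = m \<longrightarrow> b"
  have "enat n = m \<Longrightarrow> 0 < n" using m2 by (cases m) auto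
  thus ?thesis using lenL_alt[OF h(2,3) m2, of c] h(1) by auto
qed
lemma gmulR_len: "w \<in> Wd m \<Longrightarrow> length (gmulR m c w) = length w + 1 \<or> length (gmulR m c w) + 1 = length w"
proof (erule Wd_cases)
  fix b n assume h: "w = alt b n" "enat n \<le> m" "enat n = m \<longrightarrow> b"
  have "enat n = m \<Longrightarrow> 0 < n" using m2 by (cases m) auto
  thus ?thesis using lenR_alt[OF h(2,3) m2, of c] h(1) by auto
qed
lemma gmul_exch:
  assumes "w \<in> Wd m" "length (gmul m c (gmulR m d w)) = length w"
   "(length (gmul m c w) > length w) = (length (gmulR m d w) > length w)"
  shows "gmul m c w = gmulR m d w"
  using assms(1)
proof (rule Wd_cases)
  fix b n assume h: "w = alt b n" "enat n \<le> m" "enat n = m \<longrightarrow> b"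
  show ?thesis using exch_alt0[OF h(2,3) m2, of c d] assms(2,3) unfolding h(1) by simp
qed

end


section \<open>Module structure\<close>

lemma lookup_hsmul[simp]: "Poly_Mapping.lookup (hsmul a x) w = a * Poly_Mapping.lookup x w"
  by (simp add: hsmul_def Poly_Mapping.map.rep_eq when_def)

lemma lookup_HT: "Poly_Mapping.lookup (HT w) u = (if w = u then 1 else 0)"
  by (simp add: HT_def lookup_single when_def)

lemma hsmul_add_right: "hsmul a (x + y) = hsmul a x + hsmul a y"
  by (rule poly_mapping_eqI) (simp add: lookup_add algebra_simps)
lemma hsmul_add_left: "hsmul (a + b) x = hsmul a x + hsmul b x"
  by (rule poly_mapping_eqI) (simp add: lookup_add algebra_simps)
lemma hsmul_zero_right[simp]: "hsmul a 0 = 0"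
  by (rule poly_mapping_eqI) simp
lemma hsmul_zero_left[simp]: "hsmul 0 x = 0"
  by (rule poly_mapping_eqI) simp
lemma hsmul_hsmul: "hsmul a (hsmul b x) = hsmul (a * b) x"
  by (rule poly_mapping_eqI) (simp add: algebra_simps)
lemma hsmul_one[simp]: "hsmul 1 x = x"
  by (rule poly_mapping_eqI) simp
lemma hsmul_sum: "hsmul a (sum f S) = (\<Sum>i\<in>S. hsmul a (f i))"
  by (induction S rule: infinite_finite_induct) (auto simp: hsmul_add_right)
lemma keys_hsmul: "Poly_Mapping.keys (hsmul a x) \<subseteq> Poly_Mapping.keys x"
  by (auto simp: in_keys_iff)

definition lin :: "(bool list \<Rightarrow> hecke) \<Rightarrow> hecke \<Rightarrow> hecke" where
  "lin f y = (\<Sum>w\<in>Poly_Mapping.keys y. hsmul (Poly_Mapping.lookup y w) (f w))"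

lemma lin_superset:
  assumes "finite S" "Poly_Mapping.keys y \<subseteq> S"
  shows "lin f y = (\<Sum>w\<in>S. hsmul (Poly_Mapping.lookup y w) (f w))"
  unfolding lin_def
  by (rule sum.mono_neutral_left) (use assms in \<open>auto simp: in_keys_iff\<close>)

lemma lin_add: "lin f (x + y) = lin f x + lin f y"
proof -
  let ?S = "Poly_Mapping.keys x \<union> Poly_Mapping.keys y"
  have "lin f (x + y) = (\<Sum>w\<in>?S. hsmul (Poly_Mapping.lookup (x+y) w) (f w))"
    by (rule lin_superset) (auto dest: subsetD[OF keys_add])
  also have "\<dots> = (\<Sum>w\<in>?S. hsmul (Poly_Mapping.lookup x w) (f w)) + (\<Sum>w\<in>?S. hsmul (Poly_Mapping.lookup y w) (f w))"
    by (simp add: lookup_add hsmul_add_left sum.distrib)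
  also have "\<dots> = lin f x + lin f y"
    using lin_superset[of ?S x f] lin_superset[of ?S y f] by simp
  finally show ?thesis .
qed

lemma lin_hsmul: "lin f (hsmul a y) = hsmul a (lin f y)"
proof -
  have "lin f (hsmul a y) = (\<Sum>w\<in>Poly_Mapping.keys y. hsmul (Poly_Mapping.lookup (hsmul a y) w) (f w))"
    by (rule lin_superset) (auto simp: keys_hsmul)
  thus ?thesis by (simp add: lin_def hsmul_sum hsmul_hsmul)
qed

lemma lin_HT[simp]: "lin f (HT w) = f w"
  by (simp add: lin_def HT_def)

lemma lin_zero[simp]: "lin f 0 = 0"
  by (simp add: lin_def)

lemma lin_cong: "(\<And>w. w \<in> Poly_Mapping.keys y \<Longrightarrow> f w = g w) \<Longrightarrow> lin f y = lin g y"
  by (simp add: lin_def)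

lemma lin_HT_id: "lin HT y = y"
proof (rule poly_mapping_eqI)
  fix k
  have "Poly_Mapping.lookup (lin HT y) k = (\<Sum>w\<in>Poly_Mapping.keys y. Poly_Mapping.lookup y w * (if w = k then 1 else 0))"
    by (simp add: lin_def lookup_sum lookup_HT)
  also have "\<dots> = Poly_Mapping.lookup y k"
    by (simp add: if_distrib[of "(*) _"] sum.delta in_keys_iff cong: if_cong)
  finally show "Poly_Mapping.lookup (lin HT y) k = Poly_Mapping.lookup y k" .
qed

definition islin :: "(hecke \<Rightarrow> hecke) \<Rightarrow> bool" where
  "islin F \<longleftrightarrow> (\<forall>x y. F (x + y) = F x + F y) \<and> (\<forall>a x. F (hsmul a x) = hsmul a (F x))"

lemma islin_lin: "islin (lin f)"
  by (simp add: islin_def lin_add lin_hsmul)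

lemma islin_zero: "islin F \<Longrightarrow> F 0 = 0"
  unfolding islin_def by (metis hsmul_zero_left)

lemma islin_sum: "islin F \<Longrightarrow> F (sum g S) = (\<Sum>i\<in>S. F (g i))"
  by (induction S rule: infinite_finite_induct) (auto simp: islin_zero islin_def)

lemma islin_expand: "islin F \<Longrightarrow> F y = lin (\<lambda>w. F (HT w)) y"
proof -
  assume F: "islin F"
  have "F y = F (lin HT y)" by (simp add: lin_HT_id)
  also have "\<dots> = lin (\<lambda>w. F (HT w)) y"
    unfolding lin_def using F by (simp add: islin_sum islin_def)
  finally show ?thesis .
qed

lemma islin_comp: "islin F \<Longrightarrow> islin G \<Longrightarrow> islin (F \<circ> G)"
  by (simp add: islin_def)
lemma islin_id: "islin id"
  by (simp add: islin_def)

lemma islin_eqI: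
  assumes "islin F" "islin G" "y \<in> Hset m" "\<And>w. w \<in> Wd m \<Longrightarrow> F (HT w) = G (HT w)"
  shows "F y = G y"
  using assms(3,4) by (subst islin_expand[OF assms(1)], subst islin_expand[OF assms(2)])
     (rule lin_cong, auto simp: Hset_def)

lemma Hset_lin:
  assumes "\<And>w. w \<in> Wd m \<Longrightarrow> f w \<in> Hset m" "y \<in> Hset m"
  shows "lin f y \<in> Hset m"
proof -
  have "Poly_Mapping.keys (lin f y) \<subseteq> (\<Union>w\<in>Poly_Mapping.keys y. Poly_Mapping.keys (hsmul (Poly_Mapping.lookup y w) (f w)))"
    unfolding lin_def by (rule keys_sum)
  also have "\<dots> \<subseteq> (\<Union>w\<in>Poly_Mapping.keys y. Poly_Mapping.keys (f w))" using keys_hsmul by blast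
  also have "\<dots> \<subseteq> Wd m" using assms by (auto simp: Hset_def)
  finally show ?thesis by (simp add: Hset_def)
qed

lemma Hset_HT: "w \<in> Wd m \<Longrightarrow> HT w \<in> Hset m"
  by (simp add: Hset_def HT_def)
lemma Hset_add: "x \<in> Hset m \<Longrightarrow> y \<in> Hset m \<Longrightarrow> x + y \<in> Hset m"
  using keys_add by (fastforce simp: Hset_def)
lemma Hset_hsmul: "x \<in> Hset m \<Longrightarrow> hsmul a x \<in> Hset m"
  using keys_hsmul by (fastforce simp: Hset_def)
lemma Hset_zero: "0 \<in> Hset m" by (simp add: Hset_def)
lemma Hset_sum: "(\<And>i. i \<in> S \<Longrightarrow> f i \<in> Hset m) \<Longrightarrow> sum f S \<in> Hset m"
  by (induction S rule: infinite_finite_induct) (simp_all add: Hset_add Hset_zero)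

lemma Tgen_lin: "Tgen m c = lin (Tbasis m c)"
  by (simp add: fun_eq_iff Tgen_def lin_def)

lemma hmul_lin: "hmul m x y = lin (\<lambda>w. Top m w y) x"
  by (simp add: hmul_def lin_def)

lemma Top_Nil[simp]: "Top m [] = id" by (simp add: Top_def)
lemma Top_Cons[simp]: "Top m (c # w) = Tgen m c \<circ> Top m w" by (simp add: Top_def)

lemma islin_Tgen: "islin (Tgen m c)" by (simp add: Tgen_lin islin_lin)
lemma islin_Top: "islin (Top m w)"
proof (induction w)
  case Nil show ?case by (simp add: islin_def)
next
  case (Cons c w) show ?case unfolding Top_Cons by (rule islin_comp[OF islin_Tgen Cons.IH])
qed

lemma islin_hmul: "islin (hmul m x)"
proof -
  have "hmul m x = (\<lambda>y. \<Sum>w\<in>Poly_Mapping.keys x. hsmul (Poly_Mapping.lookup x w) (Top m w y))"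
    by (simp add: fun_eq_iff hmul_def)
  moreover have "islin (\<lambda>y. \<Sum>w\<in>Poly_Mapping.keys x. hsmul (Poly_Mapping.lookup x w) (Top m w y))"
    using islin_Top[of m] unfolding islin_def
    by (simp add: sum.distrib hsmul_add_right hsmul_sum hsmul_hsmul mult.commute)
  ultimately show ?thesis by simp
qed

lemma hmul_add_left: "hmul m (x + x') y = hmul m x y + hmul m x' y"
  by (simp add: hmul_lin lin_add)
lemma hmul_hsmul_left: "hmul m (hsmul a x) y = hsmul a (hmul m x y)"
  by (simp add: hmul_lin lin_hsmul)
lemma hmul_hsmul_right: "hmul m x (hsmul a y) = hsmul a (hmul m x y)"
  using islin_hmul unfolding islin_def by blast
lemma hmul_zero_left[simp]: "hmul m 0 y = 0" by (simp add: hmul_lin)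
lemma hmul_zero_right[simp]: "hmul m x 0 = 0" using islin_zero[OF islin_hmul] .


definition Rbasis :: "enat \<Rightarrow> bool \<Rightarrow> bool list \<Rightarrow> hecke" where
  "Rbasis m d w =
     (if length w < length (gmulR m d w) then HT (gmulR m d w)
      else hsmul (vp (-2) - 1) (HT w) + hsmul (vp (-2)) (HT (gmulR m d w)))"

definition Rgen :: "enat \<Rightarrow> bool \<Rightarrow> hecke \<Rightarrow> hecke" where
  "Rgen m d = lin (Rbasis m d)"

definition RopL :: "enat \<Rightarrow> bool list \<Rightarrow> hecke \<Rightarrow> hecke" where
  "RopL m u y = fold (Rgen m) u y"

lemma RopL_Nil[simp]: "RopL m [] y = y" by (simp add: RopL_def)
lemma RopL_snoc[simp]: "RopL m (u @ [d]) y = Rgen m d (RopL m u y)" by (simp add: RopL_def)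

lemma islin_Rgen: "islin (Rgen m d)" by (simp add: Rgen_def islin_lin)

lemma Tgen_HT[simp]: "Tgen m c (HT w) = Tbasis m c w" by (simp add: Tgen_lin)
lemma Rgen_HT[simp]: "Rgen m c (HT w) = Rbasis m c w" by (simp add: Rgen_def)

lemma Tgen_add: "Tgen m c (x + y) = Tgen m c x + Tgen m c y" by (simp add: Tgen_lin lin_add)
lemma Tgen_hsmul: "Tgen m c (hsmul a x) = hsmul a (Tgen m c x)" by (simp add: Tgen_lin lin_hsmul)
lemma Rgen_add: "Rgen m c (x + y) = Rgen m c x + Rgen m c y" by (simp add: Rgen_def lin_add)
lemma Rgen_hsmul: "Rgen m c (hsmul a x) = hsmul a (Rgen m c x)" by (simp add: Rgen_def lin_hsmul)

context fixes m :: enat assumes m2: "2 \<le> m" begin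

lemma Tbasis_Hset: "w \<in> Wd m \<Longrightarrow> Tbasis m c w \<in> Hset m"
  by (auto simp: Tbasis_def intro!: Hset_add Hset_hsmul Hset_HT gmul_Wd[OF m2])
lemma Rbasis_Hset: "w \<in> Wd m \<Longrightarrow> Rbasis m c w \<in> Hset m"
  by (auto simp: Rbasis_def intro!: Hset_add Hset_hsmul Hset_HT gmulR_Wd[OF m2])
lemma Tgen_Hset: "y \<in> Hset m \<Longrightarrow> Tgen m c y \<in> Hset m"
  unfolding Tgen_lin by (rule Hset_lin[OF Tbasis_Hset])
lemma Rgen_Hset: "y \<in> Hset m \<Longrightarrow> Rgen m c y \<in> Hset m"
  unfolding Rgen_def by (rule Hset_lin[OF Rbasis_Hset])
lemma Top_Hset: "y \<in> Hset m \<Longrightarrow> Top m w y \<in> Hset m"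
  by (induction w) (auto simp: Tgen_Hset)
lemma RopL_Hset: "y \<in> Hset m \<Longrightarrow> RopL m u y \<in> Hset m"
  by (induction u rule: rev_induct) (auto simp: Rgen_Hset)
lemma hmul_Hset: "y \<in> Hset m \<Longrightarrow> hmul m x y \<in> Hset m"
  unfolding hmul_def by (intro Hset_sum Hset_hsmul Top_Hset)

lemma comm_basis:
  assumes u: "u \<in> Wd m"
  shows "Tgen m c (Rbasis m d u) = Rgen m d (Tbasis m c u)"
proof -
  define cu where "cu = gmul m c u"
  define ud where "ud = gmulR m d u"
  define z where "z = gmul m c ud"
  have cuW: "cu \<in> Wd m" "ud \<in> Wd m" using u by (simp_all add: cu_def ud_def gmul_Wd[OF m2] gmulR_Wd[OF m2])
  have i1: "gmul m c cu = u" "gmulR m d ud = u" using u by (simp_all add: cu_def ud_def gmul_inv[OF m2] gmulR_inv[OF m2])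
  have a: "gmulR m d cu = z" using u by (simp add: cu_def ud_def z_def gmul_assoc[OF m2])
  have l1: "length cu = length u + 1 \<or> length cu + 1 = length u" using gmul_len[OF m2 u] cu_def by simp
  have l2: "length ud = length u + 1 \<or> length ud + 1 = length u" using gmulR_len[OF m2 u] ud_def by simp
  have l3: "length z = length ud + 1 \<or> length z + 1 = length ud" using gmul_len[OF m2 cuW(2)] z_def by simp
  have l4: "length z = length cu + 1 \<or> length z + 1 = length cu" using gmulR_len[OF m2 cuW(1), of d] a by simp
  have ex: "length z = length u \<Longrightarrow> (length cu > length u) = (length ud > length u) \<Longrightarrow> cu = ud"
    using gmul_exch[OF m2 u] z_def cu_def ud_def by simp
  have zu: "cu = ud \<Longrightarrow> z = u" using i1 z_def by simp
  have zu2: "cu = ud \<Longrightarrow> gmulR m d cu = u" using i1 by simp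
  show ?thesis
    unfolding Tbasis_def Rbasis_def cu_def[symmetric] ud_def[symmetric] z_def[symmetric] i1 a
    using l1 l2 l3 l4 ex zu
    by (auto simp: Tgen_add Tgen_hsmul Rgen_add Rgen_hsmul Tbasis_def Rbasis_def i1 a
       cu_def[symmetric] ud_def[symmetric] z_def[symmetric] intro!: poly_mapping_eqI
       simp add: lookup_add lookup_HT algebra_simps)
qed


lemma comm_gen: "y \<in> Hset m \<Longrightarrow> Tgen m c (Rgen m d y) = Rgen m d (Tgen m c y)"
  using islin_eqI[of "Tgen m c \<circ> Rgen m d" "Rgen m d \<circ> Tgen m c" y m]
  by (simp add: islin_comp islin_Tgen islin_Rgen comm_basis)

lemma Top_Rgen: "y \<in> Hset m \<Longrightarrow> Top m w (Rgen m d y) = Rgen m d (Top m w y)"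
  by (induction w) (simp_all add: comm_gen Top_Hset)

lemma hmul_Rgen: "y \<in> Hset m \<Longrightarrow> hmul m x (Rgen m d y) = Rgen m d (hmul m x y)"
  unfolding hmul_def by (simp add: Top_Rgen islin_sum[OF islin_Rgen] Rgen_hsmul)

lemma hmul_RopL: "y \<in> Hset m \<Longrightarrow> hmul m x (RopL m u y) = RopL m u (hmul m x y)"
  by (induction u rule: rev_induct) (simp_all add: hmul_Rgen RopL_Hset)

lemma Top_alt_Nil: "enat n \<le> m \<Longrightarrow> (enat n = m \<longrightarrow> b) \<Longrightarrow> Top m (alt b n) (HT []) = HT (alt b n)"
proof (induction n arbitrary: b)
  case 0 thus ?case by simp
next
  case (Suc k)
  have k: "enat k \<le> m" "enat k \<noteq> m" using Suc.prems
    by (cases m; simp)+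
  have IH: "Top m (alt (\<not> b) k) (HT []) = HT (alt (\<not> b) k)" using Suc.IH k by simp
  have g: "gmul m b (alt (\<not> b) k) = alt b (Suc k)"
    using Suc.prems k by (simp add: gmul_alt canon_alt alt_eq_iff)
  show ?case by (simp add: alt_Suc[of b k] IH Tbasis_def g)
qed

lemma Top_HT_Nil: "w \<in> Wd m \<Longrightarrow> Top m w (HT []) = HT w"
  by (erule Wd_cases) (simp add: Top_alt_Nil)

lemma RopL_alt_Nil: "enat n \<le> m \<Longrightarrow> (enat n = m \<longrightarrow> b) \<Longrightarrow> RopL m (alt b n) (HT []) = HT (alt b n)"
proof (induction n)
  case 0 thus ?case by simp
next
  case (Suc k)
  have k: "enat k \<le> m" "enat k \<noteq> m" using Suc.prems
    by (cases m; simp)+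
  have IH: "RopL m (alt b k) (HT []) = HT (alt b k)" using Suc.IH k by simp
  have g: "gmulR m (if even k then b else \<not> b) (alt b k) = alt b (Suc k)"
    using Suc.prems k m2 by (cases k) (auto simp: gmulR_alt canon_alt alt_eq_iff simp del: alt_0 alt_1)
  show ?case by (simp add: alt_snoc[of b k] IH Rbasis_def g)
qed

lemma RopL_HT_Nil: "w \<in> Wd m \<Longrightarrow> RopL m w (HT []) = HT w"
  by (erule Wd_cases) (simp add: RopL_alt_Nil)

lemma hmul_unit_right: "x \<in> Hset m \<Longrightarrow> hmul m x (HT []) = x"
  unfolding hmul_lin
  by (subst lin_HT_id[symmetric], rule lin_cong) (auto simp: Hset_def Top_HT_Nil)

lemma Nil_Wd: "[] \<in> Wd m"
  unfolding Wd_iff by (rule exI[of _ True], rule exI[of _ 0]) (simp add: zero_enat_def[symmetric])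

lemma hmul_HT_right: "p \<in> Hset m \<Longrightarrow> u \<in> Wd m \<Longrightarrow> hmul m p (HT u) = RopL m u p"
  using hmul_RopL[of "HT []" p u] by (simp add: RopL_HT_Nil Hset_HT Nil_Wd hmul_unit_right)

lemma hmul_assoc:
  assumes "x \<in> Hset m" "y \<in> Hset m" "z \<in> Hset m"
  shows "hmul m (hmul m x y) z = hmul m x (hmul m y z)"
proof -
  have "islin (hmul m x \<circ> hmul m y)" by (intro islin_comp islin_hmul)
  thus ?thesis
    using islin_eqI[of "hmul m (hmul m x y)" "hmul m x \<circ> hmul m y" z m] assms
    by (simp add: islin_hmul hmul_HT_right hmul_Hset hmul_RopL)
qed

end

lemma hmul_unit_left: "hmul m (HT []) y = y"
  by (simp add: hmul_lin)


section \<open>Parabolic elements\<close>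

lemma vp_mult: "vp a * vp b = vp (a + b)" by (simp add: vp_def mult_single)
lemma vp_0[simp]: "vp 0 = 1" by (simp add: vp_def)

lemma hsmul_sum_left: "(\<Sum>i\<in>S. hsmul (f i) B) = hsmul (sum f S) B"
  by (induction S rule: infinite_finite_induct) (auto simp: hsmul_add_left)

lemma hsmul_minus1: "X + hsmul (a - 1) X = hsmul a X"
  by (rule poly_mapping_eqI) (simp add: lookup_add algebra_simps)

context fixes m :: enat assumes m2: "2 \<le> m" begin

lemma Tgen_pair:
  assumes A: "finite A" "A \<subseteq> Wd m" "\<And>w. w \<in> A \<Longrightarrow> gmul m c w \<in> A"
  shows "Tgen m c (\<Sum>w\<in>A. HT w) = hsmul (vp (-2)) (\<Sum>w\<in>A. HT w)"
proof -
  define U where "U = {w\<in>A. length w < length (gmul m c w)}"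
  define D where "D = A - U"
  have AUD: "A = U \<union> D" "U \<inter> D = {}" "finite U" "finite D" using A by (auto simp: U_def D_def)
  have inv: "\<And>w. w \<in> A \<Longrightarrow> gmul m c (gmul m c w) = w" using A(2) gmul_inv[OF m2] by blast
  have len: "\<And>w. w \<in> A \<Longrightarrow> length (gmul m c w) = length w + 1 \<or> length (gmul m c w) + 1 = length w"
    using A(2) gmul_len[OF m2] by blast
  have UD: "gmul m c w \<in> D" if "w \<in> U" for w
  proof -
    have "w \<in> A" "length w < length (gmul m c w)" using that by (auto simp: U_def)
    thus ?thesis using inv[of w] A(3)[of w] by (auto simp: U_def D_def)
  qed
  have DU: "gmul m c w \<in> U" if "w \<in> D" for w
  proof -
    have "w \<in> A" "\<not> length w < length (gmul m c w)" using that by (auto simp: U_def D_def)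
    thus ?thesis using inv[of w] A(3)[of w] len[of w] by (auto simp: U_def D_def)
  qed
  have invU: "gmul m c (gmul m c w) = w" if "w \<in> U \<or> w \<in> D" for w
    using that inv by (auto simp: U_def D_def)
  have sU: "(\<Sum>w\<in>U. HT (gmul m c w)) = (\<Sum>w\<in>D. HT w)"
    by (rule sum.reindex_bij_witness[where i="gmul m c" and j="gmul m c"])
       (simp_all add: UD DU invU)
  have sD: "(\<Sum>w\<in>D. HT (gmul m c w)) = (\<Sum>w\<in>U. HT w)"
    by (rule sum.reindex_bij_witness[where i="gmul m c" and j="gmul m c"])
       (simp_all add: UD DU invU)
  have "Tgen m c (\<Sum>w\<in>A. HT w) = (\<Sum>w\<in>A. Tbasis m c w)"
    by (simp add: islin_sum[OF islin_Tgen])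
  also have "\<dots> = (\<Sum>w\<in>U. Tbasis m c w) + (\<Sum>w\<in>D. Tbasis m c w)"
    using AUD by (simp add: sum.union_disjoint)
  also have "(\<Sum>w\<in>U. Tbasis m c w) = (\<Sum>w\<in>U. HT (gmul m c w))"
    by (rule sum.cong) (auto simp: Tbasis_def U_def)
  also have "(\<Sum>w\<in>D. Tbasis m c w) = hsmul (vp (-2) - 1) (\<Sum>w\<in>D. HT w) + hsmul (vp (-2)) (\<Sum>w\<in>D. HT (gmul m c w))"
    by (subst sum.cong[OF refl, of _ _ "\<lambda>w. hsmul (vp (-2) - 1) (HT w) + hsmul (vp (-2)) (HT (gmul m c w))"])
       (auto simp: Tbasis_def U_def D_def sum.distrib hsmul_sum)
  finally have "Tgen m c (\<Sum>w\<in>A. HT w) = hsmul (vp (-2)) (\<Sum>w\<in>D. HT w) + hsmul (vp (-2)) (\<Sum>w\<in>U. HT w)"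
    unfolding sU sD by (simp add: add.assoc[symmetric] hsmul_minus1)
  also have "\<dots> = hsmul (vp (-2)) (\<Sum>w\<in>A. HT w)"
    using AUD by (simp add: sum.union_disjoint hsmul_add_right add.commute)
  finally show ?thesis .
qed

lemma Top_absorb:
  assumes "\<And>c. c \<in> X \<Longrightarrow> Tgen m c B = hsmul (vp (-2)) B" "set w \<subseteq> X"
  shows "Top m w B = hsmul (vp (- 2 * int (length w))) B"
  using assms(2)
proof (induction w)
  case Nil thus ?case by simp
next
  case (Cons c w)
  hence "Top m (c # w) B = hsmul (vp (- 2 * int (length w))) (hsmul (vp (-2)) B)"
    using assms(1) by (simp add: Tgen_hsmul)
  thus ?case by (simp add: hsmul_hsmul vp_mult algebra_simps)
qed

lemma idem_generic:
  assumes A: "finite A" "A \<subseteq> Wd m" "\<And>c w. c \<in> X \<Longrightarrow> w \<in> A \<Longrightarrow> gmul m c w \<in> A"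
    "\<And>w. w \<in> A \<Longrightarrow> set w \<subseteq> X"
    and phi: "\<And>w. w \<in> A \<Longrightarrow> \<phi> w \<in> A" "\<And>w. w \<in> A \<Longrightarrow> \<phi> (\<phi> w) = w"
     "\<And>w. w \<in> A \<Longrightarrow> length (\<phi> w) + length w = l"
    and B: "B = hsmul (vp (int l)) (\<Sum>w\<in>A. HT w)"
  shows "hmul m B B = hsmul (vp (- int l) * (\<Sum>w\<in>A. vp (2 * int (length w)))) B"
proof -
  have TB: "Tgen m c B = hsmul (vp (-2)) B" if "c \<in> X" for c
    using Tgen_pair[OF A(1,2), of c] A(3)[OF that] B by (simp add: Tgen_hsmul hsmul_hsmul mult.commute)
  have TA: "Top m w B = hsmul (vp (- 2 * int (length w))) B" if "w \<in> A" for w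
    by (rule Top_absorb[where X=X]) (use TB A(4)[OF that] in auto)
  have "hmul m B B = hsmul (vp (int l)) (\<Sum>w\<in>A. Top m w B)"
    by (simp add: B hmul_hsmul_left hmul_lin lin_hsmul islin_sum[OF islin_lin])
  also have "\<dots> = hsmul (vp (int l)) (\<Sum>w\<in>A. hsmul (vp (- 2 * int (length w))) B)"
    by (rule arg_cong[where f="hsmul _"], rule sum.cong[OF refl TA])
  also have "\<dots> = hsmul (vp (int l) * (\<Sum>w\<in>A. vp (- 2 * int (length w)))) B"
    by (simp add: hsmul_sum_left hsmul_hsmul)
  also have "vp (int l) * (\<Sum>w\<in>A. vp (- 2 * int (length w))) = (\<Sum>w\<in>A. vp (int l - 2 * int (length w)))"
    by (simp add: sum_distrib_left vp_mult)
  also have "\<dots> = (\<Sum>w\<in>A. vp (- int l + 2 * int (length w)))"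
  proof (rule sum.reindex_bij_witness[where i=\<phi> and j=\<phi>])
    fix w assume w: "w \<in> A"
    show "\<phi> (\<phi> w) = w" "\<phi> w \<in> A" using phi w by auto
    have "int (length (\<phi> w)) + int (length w) = int l" using phi(3)[OF w] by (metis of_nat_add)
    thus "vp (- int l + 2 * int (length (\<phi> w))) = vp (int l - 2 * int (length w))"
      by (intro arg_cong[where f=vp]) linarith
  next
    fix w assume w: "w \<in> A"
    show "\<phi> (\<phi> w) = w" "\<phi> w \<in> A" using phi w by auto
  qed
  also have "\<dots> = vp (- int l) * (\<Sum>w\<in>A. vp (2 * int (length w)))"
    by (simp add: sum_distrib_left vp_mult)
  finally show ?thesis .
qed

end


lemma subseq_single: "subseq u [c] \<longleftrightarrow> u = [] \<or> u = [c]"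
  by (cases u) auto

lemma subseq_Nil_right: "subseq u [] \<longleftrightarrow> u = []"
  by auto

lemma weval_Nil[simp]: "weval m [] = []" by (simp add: weval_def)
lemma weval_Cons[simp]: "weval m (c # u) = gmul m c (weval m u)" by (simp add: weval_def)

context fixes m :: enat assumes m2: "2 \<le> m" begin

lemma single_Wd: "[c] \<in> Wd m"
  unfolding Wd_iff using m2
  by (intro exI[of _ c] exI[of _ 1]) (cases m, auto simp: one_enat_def)

lemma gmul_Nil_c: "gmul m c [] = [c]"
proof -
  have "enat 0 \<noteq> m" using m2 by (cases m) auto
  thus ?thesis using canon_single[OF m2] by (simp add: gmul_def)
qed

lemma gmul_c_c: "gmul m c [c] = []"
  by (simp add: gmul_def)

lemma gmul_up: "enat (Suc k) \<le> m \<Longrightarrow> (enat (Suc k) = m \<longrightarrow> b) \<Longrightarrow> gmul m b (alt (\<not> b) k) = alt b (Suc k)"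
  by (cases m) (auto simp: gmul_alt canon_alt alt_eq_iff)

lemma weval_alt: "enat n \<le> m \<Longrightarrow> (enat n = m \<longrightarrow> b) \<Longrightarrow> weval m (alt b n) = alt b n"
proof (induction n arbitrary: b)
  case 0 thus ?case by simp
next
  case (Suc k)
  have k: "enat k \<le> m" "enat k \<noteq> m" using Suc.prems by (cases m; simp)+
  show ?case using Suc.IH[of "\<not> b"] k Suc.prems by (simp add: alt_Suc[of b k] gmul_up)
qed

lemma WJ_empty: "WJ m {} = {[]}"
  using Nil_Wd[OF m2] by (auto simp: WJ_def)

lemma wJ_empty: "wJ m {} = []"
  unfolding wJ_def WJ_empty by auto

lemma bJ_empty: "bJ m {} = HT []"
proof -
  have "{x \<in> Wd m. bruhat_le m x []} = {[]}"
    using Nil_Wd[OF m2] by (auto simp: bruhat_le_def subseq_Nil_right)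
  thus ?thesis by (simp add: bJ_def wJ_empty KL_def)
qed

lemma brk_empty: "brk m {} = 1"
  by (simp add: brk_def wJ_empty WJ_empty)

lemma finitary_empty: "finitary m {}"
  by (simp add: finitary_def WJ_empty)

lemma WJ_single: "WJ m {c} = {[], [c]}"
proof
  show "WJ m {c} \<subseteq> {[], [c]}"
  proof
    fix w assume "w \<in> WJ m {c}"
    hence w: "w \<in> Wd m" "set w \<subseteq> {c}" by (auto simp: WJ_def)
    from w(1) obtain b n where bn: "w = alt b n" by (rule Wd_cases)
    show "w \<in> {[], [c]}"
    proof (cases n)
      case 0 thus ?thesis using bn by simp
    next
      case (Suc k)
      show ?thesis
      proof (cases k)
        case 0 thus ?thesis using bn Suc w(2) by simp
      next
        case (Suc j)
        hence "b \<in> set w" "(\<not> b) \<in> set w" using bn \<open>n = Suc k\<close> by (simp_all add: alt_Suc)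
        thus ?thesis using w(2) by auto
      qed
    qed
  qed
  show "{[], [c]} \<subseteq> WJ m {c}" using Nil_Wd[OF m2] single_Wd by (auto simp: WJ_def)
qed

lemma wJ_single: "wJ m {c} = [c]"
  unfolding wJ_def WJ_single by (rule the_equality) auto

lemma bJ_single: "bJ m {c} = hsmul (vp (int 1)) (\<Sum>w\<in>{[], [c]}. HT w)"
proof -
  have "{x \<in> Wd m. bruhat_le m x [c]} = {[], [c]}"
    using Nil_Wd[OF m2] single_Wd by (auto simp: bruhat_le_def subseq_single gmul_Nil_c)
  thus ?thesis by (simp add: bJ_def wJ_single KL_def)
qed

lemma brk_single: "brk m {c} = vp (- int 1) * (\<Sum>w\<in>{[], [c]}. vp (2 * int (length w)))"
  by (simp add: brk_def wJ_single WJ_single)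

end


lemma take_alt: "n \<le> N \<Longrightarrow> take n (alt b N) = alt b n"
  by (simp add: alt_def take_map min_def)

lemma not_finitary_UNIV_inf: "\<not> finitary \<infinity> UNIV"
proof
  assume "finitary \<infinity> UNIV"
  hence "finite (Wd \<infinity>)" by (simp add: finitary_def WJ_def)
  moreover have "range (alt True) \<subseteq> Wd \<infinity>"
  proof
    fix w assume "w \<in> range (alt True)"
    then obtain n where "w = alt True n" by auto
    thus "w \<in> Wd \<infinity>" unfolding Wd_iff by (intro exI[of _ True] exI[of _ n]) simp
  qed
  ultimately have "finite (range (alt True))" by (rule finite_subset[rotated])
  moreover have "inj (alt True)" by (rule injI) (simp add: alt_eq_iff)
  ultimately show False using range_inj_infinite by blast
qed

context fixes M :: nat assumes M2: "2 \<le> M" begin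

lemma m2M: "2 \<le> enat M" using M2 by (simp add: numeral_eq_enat)

lemma Wd_len: "w \<in> Wd (enat M) \<Longrightarrow> length w \<le> M"
  by (erule Wd_cases) simp

lemma Wd_top: "w \<in> Wd (enat M) \<Longrightarrow> length w = M \<Longrightarrow> w = alt True M"
  by (erule Wd_cases) simp

lemma top_Wd: "alt True M \<in> Wd (enat M)"
  unfolding Wd_iff by auto

lemma finite_WdM: "finite (Wd (enat M))"
proof -
  have "Wd (enat M) \<subseteq> (\<lambda>(b, n). alt b n) ` (UNIV \<times> {..M})"
  proof
    fix w assume "w \<in> Wd (enat M)"
    then obtain b n where "w = alt b n" "n \<le> M" by (rule Wd_cases) auto
    thus "w \<in> (\<lambda>(b, n). alt b n) ` (UNIV \<times> {..M})" by (intro image_eqI[of _ _ "(b, n)"]) auto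
  qed
  thus ?thesis by (rule finite_subset) auto
qed

lemma WJ_UNIV: "WJ m UNIV = Wd m" by (simp add: WJ_def)

lemma wJ_UNIV: "wJ (enat M) UNIV = alt True M"
  unfolding wJ_def WJ_UNIV
proof (rule the_equality)
  show "alt True M \<in> Wd (enat M) \<and> (\<forall>x\<in>Wd (enat M). length x \<le> length (alt True M))"
    using top_Wd Wd_len by simp
  fix w assume "w \<in> Wd (enat M) \<and> (\<forall>x\<in>Wd (enat M). length x \<le> length w)"
  hence "w \<in> Wd (enat M)" "length w = M" using top_Wd Wd_len[of w] by force+
  thus "w = alt True M" by (rule Wd_top)
qed

lemma bruhat_all: "x \<in> Wd (enat M) \<Longrightarrow> bruhat_le (enat M) x (alt True M)"
proof (erule Wd_cases)
  fix b n assume h: "x = alt b n" "enat n \<le> enat M" "enat n = enat M \<longrightarrow> b"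
  have we: "weval (enat M) x = x" using h weval_alt[OF m2M] by simp
  have "subseq x (alt True M)"
  proof (cases b)
    case True
    hence "x = take n (alt True M)" using h by (simp add: take_alt)
    thus ?thesis using prefix_imp_subseq[OF take_is_prefix] by simp
  next
    case False
    hence nM: "n \<le> M - 1" using h by auto
    have "Suc (M - 1) = M" using M2 by simp
    hence "alt True M = True # alt False (M - 1)" using alt_Suc[of True "M - 1"] by simp
    moreover have "x = take n (alt False (M - 1))" using h False nM by (simp add: take_alt)
    ultimately show ?thesis using prefix_imp_subseq[OF take_is_prefix, of n "alt False (M - 1)"] by auto
  qed
  thus "bruhat_le (enat M) x (alt True M)" unfolding bruhat_le_def using we by blast
qed

lemma bJ_UNIV: "bJ (enat M) UNIV = hsmul (vp (int M)) (\<Sum>w\<in>Wd (enat M). HT w)"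
proof -
  have "{x \<in> Wd (enat M). bruhat_le (enat M) x (alt True M)} = Wd (enat M)"
    using bruhat_all by auto
  thus ?thesis by (simp add: bJ_def wJ_UNIV KL_def)
qed

lemma brk_UNIV: "brk (enat M) UNIV = vp (- int M) * (\<Sum>w\<in>Wd (enat M). vp (2 * int (length w)))"
  by (simp add: brk_def wJ_UNIV WJ_UNIV)

definition phiM :: "bool list \<Rightarrow> bool list" where
  "phiM w = (if w = [] then alt True M else if w = alt True M then [] else alt (hd w) (M - length w))"

lemma phiM_props:
  assumes "w \<in> Wd (enat M)"
  shows "phiM w \<in> Wd (enat M)" "phiM (phiM w) = w" "length (phiM w) + length w = M"
proof -
  obtain b n where h: "w = alt b n" "n \<le> M" "n = M \<longrightarrow> b" using assms by (rule Wd_cases) auto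
  have top_ne: "alt True M \<noteq> []" using M2 by simp
  consider "n = 0" | "n = M" | "0 < n" "n < M" using h by linarith
  hence "phiM w \<in> Wd (enat M) \<and> phiM (phiM w) = w \<and> length (phiM w) + length w = M"
  proof cases
    case 1 thus ?thesis using h top_ne top_Wd Nil_Wd[OF m2M] by (simp add: phiM_def)
  next
    case 2 thus ?thesis using h top_ne Nil_Wd[OF m2M] by (simp add: phiM_def)
  next
    case 3
    have ne: "w \<noteq> []" "w \<noteq> alt True M" using 3 h by (auto simp: alt_eq_iff)
    have hd: "hd w = b" using h 3 hd_alt by simp
    have p: "phiM w = alt b (M - n)" using ne hd h by (simp add: phiM_def)
    have ne2: "alt b (M - n) \<noteq> []" "alt b (M - n) \<noteq> alt True M" using 3 by (auto simp: alt_eq_iff)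
    have "phiM (alt b (M - n)) = alt b n" using ne2 3 hd_alt[of "M - n" b] by (simp add: phiM_def)
    moreover have "alt b (M - n) \<in> Wd (enat M)" unfolding Wd_iff using 3
      by (intro exI[of _ b] exI[of _ "M - n"]) auto
    ultimately show ?thesis using p h 3 by simp
  qed
  thus "phiM w \<in> Wd (enat M)" "phiM (phiM w) = w" "length (phiM w) + length w = M" by auto
qed

end




lemma X_cases: "X = {} \<or> X = {True} \<or> X = {False} \<or> X = (UNIV :: bool set)"
proof -
  consider "True \<in> X" "False \<in> X" | "True \<in> X" "False \<notin> X" | "True \<notin> X" "False \<in> X"
    | "True \<notin> X" "False \<notin> X" by blast
  thus ?thesis
  proof cases
    case 1 hence "X = UNIV" by (intro set_eqI, case_tac x) auto
    thus ?thesis by simp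
  next
    case 2 hence "X = {True}" by (intro set_eqI, case_tac x) auto
    thus ?thesis by simp
  next
    case 3 hence "X = {False}" by (intro set_eqI, case_tac x) auto
    thus ?thesis by simp
  next
    case 4 hence "X = {}" by (intro set_eqI, case_tac x) auto
    thus ?thesis by simp
  qed
qed

lemma parabolic_data:
  assumes m2: "2 \<le> m" and fin: "finitary m X" and ne: "X \<noteq> {}"
  shows "\<exists>A l \<phi>. finite A \<and> A \<subseteq> Wd m \<and> (\<forall>c\<in>X. \<forall>w\<in>A. gmul m c w \<in> A) \<and> (\<forall>w\<in>A. set w \<subseteq> X)
    \<and> (\<forall>w\<in>A. \<phi> w \<in> A \<and> \<phi> (\<phi> w) = w \<and> length (\<phi> w) + length w = l) \<and> [] \<in> A
    \<and> bJ m X = hsmul (vp (int l)) (\<Sum>w\<in>A. HT w) \<and> brk m X = vp (- int l) * (\<Sum>w\<in>A. vp (2 * int (length w)))"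
proof -
  have single: ?thesis if X: "X = {c}" for c
  proof -
    let ?A = "{[], [c]} :: bool list set"
    let ?phi = "\<lambda>w::bool list. if w = [] then [c] else []"
    have "finite ?A \<and> ?A \<subseteq> Wd m \<and> (\<forall>c\<in>X. \<forall>w\<in>?A. gmul m c w \<in> ?A) \<and> (\<forall>w\<in>?A. set w \<subseteq> X)
    \<and> (\<forall>w\<in>?A. ?phi w \<in> ?A \<and> ?phi (?phi w) = w \<and> length (?phi w) + length w = 1) \<and> [] \<in> ?A
    \<and> bJ m X = hsmul (vp (int 1)) (\<Sum>w\<in>?A. HT w) \<and> brk m X = vp (- int 1) * (\<Sum>w\<in>?A. vp (2 * int (length w)))"
      using Nil_Wd[OF m2] single_Wd[OF m2]
      by (intro conjI) (simp_all add: X gmul_Nil_c[OF m2] gmul_c_c[OF m2] bJ_single[OF m2] brk_single[OF m2])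
    thus ?thesis by (intro exI[of _ ?A] exI[of _ 1] exI[of _ ?phi])
  qed
  have univ: ?thesis if X: "X = UNIV"
  proof -
    obtain M where M: "m = enat M" using fin X not_finitary_UNIV_inf by (cases m) auto
    have M2: "2 \<le> M" using m2 M by (simp add: numeral_eq_enat)
    have "finite (Wd m) \<and> Wd m \<subseteq> Wd m \<and> (\<forall>c\<in>X. \<forall>w\<in>Wd m. gmul m c w \<in> Wd m) \<and> (\<forall>w\<in>Wd m. set w \<subseteq> X)
    \<and> (\<forall>w\<in>Wd m. phiM M w \<in> Wd m \<and> phiM M (phiM M w) = w \<and> length (phiM M w) + length w = M) \<and> [] \<in> Wd m
    \<and> bJ m X = hsmul (vp (int M)) (\<Sum>w\<in>Wd m. HT w) \<and> brk m X = vp (- int M) * (\<Sum>w\<in>Wd m. vp (2 * int (length w)))"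
      unfolding X M using finite_WdM[OF M2] gmul_Wd[OF m2[unfolded M]] phiM_props[OF M2] Nil_Wd[OF m2[unfolded M]]
        bJ_UNIV[OF M2] brk_UNIV[OF M2]
      by (intro conjI) (simp_all add: subset_iff)
    thus ?thesis by (intro exI[of _ "Wd m"] exI[of _ M] exI[of _ "phiM M"])
  qed
  from X_cases[of X] ne consider "X = {True}" | "X = {False}" | "X = UNIV" by blast
  thus ?thesis
  proof cases
    case 1 thus ?thesis by (rule single)
  next
    case 2 thus ?thesis by (rule single)
  next
    case 3 thus ?thesis by (rule univ)
  qed
qed

lemma lookup_vp0: "Poly_Mapping.lookup (vp k) 0 = (if k = 0 then 1 else 0)"
  by (simp add: vp_def lookup_single when_def)

lemma par_facts:
  assumes m2: "2 \<le> m" and fin: "finitary m X" and ne: "X \<noteq> {}"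
  shows "bJ m X \<in> Hset m" "hmul m (bJ m X) (bJ m X) = hsmul (brk m X) (bJ m X)" "brk m X \<noteq> 0"
proof -
  obtain A l \<phi> where A: "finite A" "A \<subseteq> Wd m" "\<forall>c\<in>X. \<forall>w\<in>A. gmul m c w \<in> A" "\<forall>w\<in>A. set w \<subseteq> X"
    "\<forall>w\<in>A. \<phi> w \<in> A \<and> \<phi> (\<phi> w) = w \<and> length (\<phi> w) + length w = l" "[] \<in> A"
    and bJ: "bJ m X = hsmul (vp (int l)) (\<Sum>w\<in>A. HT w)"
    and brk: "brk m X = vp (- int l) * (\<Sum>w\<in>A. vp (2 * int (length w)))"
    using parabolic_data[OF assms] by blast
  show "bJ m X \<in> Hset m" unfolding bJ using A(2) by (intro Hset_hsmul Hset_sum Hset_HT) auto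
  show "hmul m (bJ m X) (bJ m X) = hsmul (brk m X) (bJ m X)"
    unfolding brk
  proof (rule idem_generic[OF m2 A(1,2), of X \<phi> l])
    show "\<And>c w. c \<in> X \<Longrightarrow> w \<in> A \<Longrightarrow> gmul m c w \<in> A" using A(3) by blast
    show "\<And>w. w \<in> A \<Longrightarrow> set w \<subseteq> X" using A(4) by blast
    show "\<And>w. w \<in> A \<Longrightarrow> \<phi> w \<in> A" "\<And>w. w \<in> A \<Longrightarrow> \<phi> (\<phi> w) = w"
      "\<And>w. w \<in> A \<Longrightarrow> length (\<phi> w) + length w = l" using A(5) by blast+
  qed (rule bJ)
  have "Poly_Mapping.lookup (\<Sum>w\<in>A. vp (2 * int (length w))) 0 = (\<Sum>w\<in>A. if w = [] then 1 else 0)"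
    by (simp add: lookup_sum lookup_vp0)
  also have "\<dots> = 1" using A(1,6) by simp
  finally have "(\<Sum>w\<in>A. vp (2 * int (length w))) \<noteq> 0" by auto
  moreover have "vp (- int l) \<noteq> 0"
  proof
    assume "vp (- int l) = 0"
    hence "vp (- int l) * vp (int l) = 0" by simp
    thus False by (simp add: vp_mult)
  qed
  ultimately show "brk m X \<noteq> 0" unfolding brk by simp
qed


lemma hsmul_inj: "c \<noteq> 0 \<Longrightarrow> hsmul c z = hsmul c x \<Longrightarrow> z = x"
  by (rule poly_mapping_eqI) (metis lookup_hsmul mult_left_cancel)

lemma trace_smul:
  assumes tr: "is_trace m e" and fin: "finitary m X" and x: "x \<in> hEnd m X" and z: "0 \<in> hEnd m X"
  shows "e X (hsmul c x) = c * e X x"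
proof -
  have lin: "\<And>a b c. a \<in> hEnd m X \<Longrightarrow> b \<in> hEnd m X \<Longrightarrow> e X (hsmul c a + b) = c * e X a + e X b"
    using tr fin unfolding is_trace_def by blast
  have "e X 0 = e X 0 + e X 0" using lin[OF z z, of 1] by simp
  hence e0: "e X 0 = 0" by simp
  show ?thesis using lin[OF x z, of c] e0 by simp
qed

theorem claim2p21:
  fixes m :: enat and eps eps' :: "bool set \<Rightarrow> hecke \<Rightarrow> laurent"
  assumes "m \<ge> 2"
    and "is_trace m eps" and "is_trace m eps'"
    and "\<forall>x\<in>hEnd m {}. eps {} x = eps' {} x"
  shows "\<forall>X. finitary m X \<longrightarrow> (\<forall>x\<in>hEnd m X. eps X x = eps' X x)"
proof (intro allI impI ballI)
  fix X x assume fin: "finitary m X" and xE: "x \<in> hEnd m X"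
  have m2: "2 \<le> m" using assms(1) .
  show "eps X x = eps' X x"
  proof (cases "X = {}")
    case True thus ?thesis using assms(4) xE by simp
  next
    case False
    define b where "b = bJ m X"
    define \<beta> where "\<beta> = brk m X"
    have bH: "b \<in> Hset m" and bb: "hmul m b b = hsmul \<beta> b" and bne: "\<beta> \<noteq> 0"
      using par_facts[OF m2 fin False] by (simp_all add: b_def \<beta>_def)
    from xE obtain y y' where y: "y \<in> Hset m" "x = hmul m y b" and y': "y' \<in> Hset m" "x = hmul m b y'"
      unfolding hEnd_def hHom_def b_def by blast
    have xH: "x \<in> Hset m" using y' hmul_Hset[OF m2] by simp
    have F1: "hmul m x b = hsmul \<beta> x"
      using hmul_assoc[OF m2 y(1) bH bH] y(2) bb by (simp add: hmul_hsmul_right)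
    have F2: "hmul m b x = hsmul \<beta> x"
      using hmul_assoc[OF m2 bH bH y'(1)] y'(2) bb by (simp add: hmul_hsmul_left)
    have HN: "HT [] \<in> Hset m" by (rule Hset_HT[OF Nil_Wd[OF m2]])
    have xHom: "x \<in> hHom m {} X"
      unfolding hHom_def bJ_empty[OF m2]
    proof (rule IntI)
      show "x \<in> {hmul m z (HT []) |z. z \<in> Hset m}"
        using xH hmul_unit_right[OF m2 xH] by (intro CollectI exI[of _ x]) simp
      show "x \<in> {hmul m (bJ m X) z |z. z \<in> Hset m}"
        using y' unfolding b_def by (intro CollectI exI[of _ y']) simp
    qed
    have bHom: "b \<in> hHom m X {}"
      unfolding hHom_def bJ_empty[OF m2]
    proof (rule IntI)
      show "b \<in> {hmul m z (bJ m X) |z. z \<in> Hset m}"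
        using HN hmul_unit_left[of m b] unfolding b_def by (intro CollectI exI[of _ "HT []"]) simp
      show "b \<in> {hmul m (HT []) z |z. z \<in> Hset m}"
        using bH hmul_unit_left[of m b] by (intro CollectI exI[of _ b]) simp
    qed
    have x0: "x \<in> hEnd m {}"
      unfolding hEnd_def hHom_def bJ_empty[OF m2]
    proof (rule IntI)
      show "x \<in> {hmul m z (HT []) |z. z \<in> Hset m}"
        using xH hmul_unit_right[OF m2 xH] by (intro CollectI exI[of _ x]) simp
      show "x \<in> {hmul m (HT []) z |z. z \<in> Hset m}"
        using xH hmul_unit_left[of m x] by (intro CollectI exI[of _ x]) simp
    qed
    have s1: "star m {} x b = hsmul \<beta> x"
      unfolding star_def brk_empty[OF m2] F1 by (rule the_equality) simp_all
    have s2: "star m X b x = x"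
      unfolding star_def \<beta>_def[symmetric] F2 by (rule the_equality) (simp, use hsmul_inj[OF bne] in blast)
    have z: "0 \<in> hEnd m X"
      unfolding hEnd_def hHom_def
    proof (rule IntI)
      show "0 \<in> {hmul m z (bJ m X) |z. z \<in> Hset m}"
        using Hset_zero[of m] by (intro CollectI exI[of _ 0]) simp
      show "0 \<in> {hmul m (bJ m X) z |z. z \<in> Hset m}"
        using Hset_zero[of m] by (intro CollectI exI[of _ 0]) simp
    qed
    have key: "e X (hsmul \<beta> x) = e {} x" if "is_trace m e" for e
    proof -
      have "e X (star m {} x b) = e {} (star m X b x)"
        using that fin finitary_empty[OF m2] xHom bHom unfolding is_trace_def by blast
      thus ?thesis using s1 s2 by simp
    qed
    have "\<beta> * eps X x = \<beta> * eps' X x"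
      using key[OF assms(2)] key[OF assms(3)] trace_smul[OF assms(2) fin xE z] trace_smul[OF assms(3) fin xE z]
        assms(4) x0 by simp
    thus ?thesis using bne by simp
  qed
qed


end
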